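(* Let $n\ge2$, $k\ge1$, $i_1,\dots,i_k\in\{1,\dots,n-1\}$, $j\in\{1,\dots,k\}$, and fix integers $a_h$ for $h\neq j$. For $e\in\mathbb{Z}$ let $V_n(e)=V_n(x_{i_1}^{a_1}\cdots x_{i_{j-1}}^{a_{j-1}}x_{i_j}^{e}x_{i_{j+1}}^{a_{j+1}}\cdots x_{i_k}^{a_k})$. Then for all sufficiently large $e$, $V_n(e)$ is a polynomial in $s$, and $\lim_{e\to\infty}\deg V_n(e)=+\infty$.
   Context: $\mathcal{B}_n$ is the Artin braid group with standard generators $x_1,\dots,x_{n-1}$; $\widehat{\beta}$ is the closure of a braid. The Jones polynomial is normalized by $V(\text{unknot})=1$ and $q^{-1}V_{L_+}-qV_{L_-}=(q^{1/2}-q^{-1/2})V_{L_0}$; with $s=q^{-1/2}$ it is a Laurent polynomial in $s$, and $V_n(\beta)=V(\widehat\beta)$. Conventions: closures of $\alpha x_i^{e+2}\gamma$, $\alpha x_i^{e+1}\gamma$, $\alpha x_i^{e}\gamma$ play the roles of $L_-,L_0,L_+$ (e.g. $V_2(x_1^2)=-s-s^5$). For a nonzero Laurent polynomial, $\deg$ is its highest exponent of $s$. *)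

theory Defs
  imports "HOL-Computational_Algebra.Formal_Laurent_Series"
begin

text \<open>A letter (i, True) is the generator x_i, a letter (i, False) is its inverse.
  Strands are numbered 1..n; the generator x_i involves strands i and i+1.\<close>

type_synonym letter = "nat \<times> bool"

definition gen_pow :: "nat \<Rightarrow> int \<Rightarrow> letter list" where
  "gen_pow i a = replicate (nat \<bar>a\<bar>) (i, 0 \<le> a)"

text \<open>The diagram of the closure of a word w of length m in B_n has the points (t,p),
  t \<in> {0..m}, p \<in> {1..n}; the crossing w!t sits between levels t and t+1, and level m is
  joined to level 0 by the closing arcs.  A state st (bool list of length m) chooses at the
  crossing t the A-smoothing (st!t = True) or the B-smoothing.  For x_i (a negative crossing in
  the conventions of the paper) the A-smoothing is the horizontal one (joining (t,i)--(t,i+1) and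
  (t+1,i)--(t+1,i+1)), the B-smoothing the vertical one; for x_i^{-1} it is the other way
  round.\<close>

definition smooth_edge :: "letter list \<Rightarrow> bool list \<Rightarrow> nat \<times> nat \<Rightarrow> nat \<times> nat \<Rightarrow> bool" where
  "smooth_edge w st u v \<longleftrightarrow>
     (\<exists>t p. t < length w \<and> u = (t, p) \<and> v = (Suc t, p) \<and>
        ((p \<noteq> fst (w!t) \<and> p \<noteq> Suc (fst (w!t))) \<or> st!t \<noteq> snd (w!t))) \<or>
     (\<exists>t. t < length w \<and> st!t = snd (w!t) \<and>
        ((u = (t, fst (w!t)) \<and> v = (t, Suc (fst (w!t)))) \<or>
         (u = (Suc t, fst (w!t)) \<and> v = (Suc t, Suc (fst (w!t)))))) \<or>
     (\<exists>p. u = (length w, p) \<and> v = (0, p))"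

definition diag_points :: "nat \<Rightarrow> letter list \<Rightarrow> (nat \<times> nat) set" where
  "diag_points n w = {0..length w} \<times> {1..n}"

definition state_rel :: "nat \<Rightarrow> letter list \<Rightarrow> bool list \<Rightarrow> nat \<times> nat \<Rightarrow> nat \<times> nat \<Rightarrow> bool" where
  "state_rel n w st u v \<longleftrightarrow> u \<in> diag_points n w \<and> v \<in> diag_points n w \<and>
     (smooth_edge w st u v \<or> smooth_edge w st v u)"

text \<open>Number of circles of the smoothed diagram = number of connected components.\<close>
definition num_loops :: "nat \<Rightarrow> letter list \<Rightarrow> bool list \<Rightarrow> nat" where
  "num_loops n w st =
     card ((\<lambda>u. {v \<in> diag_points n w. (state_rel n w st)\<^sup>*\<^sup>* u v}) ` diag_points n w)"

text \<open>Laurent polynomials in the variable A (with A^4 = t^{-1} = q^{-1}).\<close>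
abbreviation monoA :: "int \<Rightarrow> int fls" where
  "monoA k \<equiv> fls_X_intpow k"

definition loop_value :: "int fls" where
  "loop_value = - monoA 2 - monoA (-2)"

definition kauffman_bracket :: "nat \<Rightarrow> letter list \<Rightarrow> int fls" where
  "kauffman_bracket n w =
     (\<Sum>st \<in> {st. length st = length w}.
        monoA (int (count_list st True) - int (count_list st False))
        * loop_value ^ (num_loops n w st - 1))"

text \<open>Writhe: x_i is a negative crossing (closures of alpha x_i^{e+2} gamma, alpha x_i^{e+1} gamma,
  alpha x_i^e gamma are L_-, L_0, L_+).\<close>
definition writhe :: "letter list \<Rightarrow> int" where
  "writhe w = (\<Sum>l\<leftarrow>w. if snd l then -1 else 1)"

definition jones_A :: "nat \<Rightarrow> letter list \<Rightarrow> int fls" where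
  "jones_A n w = (if even (writhe w) then 1 else -1) * monoA (- 3 * writhe w) * kauffman_bracket n w"

text \<open>V_n(w) as a Laurent polynomial in s = q^{-1/2} = A^2 (only even powers of A occur).\<close>
definition jones :: "nat \<Rightarrow> letter list \<Rightarrow> int fls" where
  "jones n w = Abs_fls (\<lambda>k. fls_nth (jones_A n w) (2 * k))"

definition fls_deg :: "int fls \<Rightarrow> int" where
  "fls_deg f = Max {k. fls_nth f k \<noteq> 0}"

definition is_poly_s :: "int fls \<Rightarrow> bool" where
  "is_poly_s f \<longleftrightarrow> (\<forall>k < 0. fls_nth f k = 0)"

end

theory Submission
  imports Defs
begin

notation fls_nth (infixl \<open>$$\<close> 75)

definition ncomp :: "'a set \<Rightarrow> ('a \<Rightarrow> 'a \<Rightarrow> bool) \<Rightarrow> nat" where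
  "ncomp A R = card ((\<lambda>u. {v \<in> A. R\<^sup>*\<^sup>* u v}) ` A)"

lemma ncomp_map:
  assumes surj: "\<phi> ` A = B"
    and ha: "\<And>x y. R x y \<Longrightarrow> S\<^sup>*\<^sup>* (\<phi> x) (\<phi> y)"
    and hb: "\<And>a b. S a b \<Longrightarrow> \<exists>x\<in>A. \<exists>y\<in>A. \<phi> x = a \<and> \<phi> y = b \<and> R\<^sup>*\<^sup>* x y"
    and hc: "\<And>x y. x \<in> A \<Longrightarrow> y \<in> A \<Longrightarrow> \<phi> x = \<phi> y \<Longrightarrow> R\<^sup>*\<^sup>* x y"
  shows "ncomp A R = ncomp B S"
proof -
  have fw: "S\<^sup>*\<^sup>* (\<phi> x) (\<phi> y)" if "R\<^sup>*\<^sup>* x y" for x y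
    using that
  proof (induction rule: rtranclp_induct)
    case base then show ?case by simp
  next
    case (step y z) then show ?case using ha[of y z] by (meson rtranclp_trans)
  qed
  have bw: "\<forall>x\<in>A. \<forall>y\<in>A. \<phi> x = a \<longrightarrow> \<phi> y = b \<longrightarrow> R\<^sup>*\<^sup>* x y" if "S\<^sup>*\<^sup>* a b" for a b
    using that
  proof (induction rule: rtranclp_induct)
    case base then show ?case using hc by blast
  next
    case (step b c)
    show ?case
    proof (intro ballI impI)
      fix x y assume x: "x \<in> A" and y: "y \<in> A" and xa: "\<phi> x = a" and yc: "\<phi> y = c"
      obtain x' y' where x': "x' \<in> A" and y': "y' \<in> A" and "\<phi> x' = b" "\<phi> y' = c" "R\<^sup>*\<^sup>* x' y'"
        using hb[OF step(2)] by blast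
      then have "R\<^sup>*\<^sup>* x x'" using step(3) x xa by blast
      moreover have "R\<^sup>*\<^sup>* y' y" using hc[OF y' y] \<open>\<phi> y' = c\<close> yc by simp
      ultimately show "R\<^sup>*\<^sup>* x y" using \<open>R\<^sup>*\<^sup>* x' y'\<close> by (meson rtranclp_trans)
    qed
  qed
  have iff: "R\<^sup>*\<^sup>* x y \<longleftrightarrow> S\<^sup>*\<^sup>* (\<phi> x) (\<phi> y)" if "x \<in> A" "y \<in> A" for x y
    using fw bw that by blast
  define cA where "cA u = {v \<in> A. R\<^sup>*\<^sup>* u v}" for u
  define cB where "cB a = {b \<in> B. S\<^sup>*\<^sup>* a b}" for a
  have img: "\<phi> ` cA u = cB (\<phi> u)" if "u \<in> A" for u
  proof
    show "\<phi> ` cA u \<subseteq> cB (\<phi> u)" using iff that surj unfolding cA_def cB_def by auto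
    show "cB (\<phi> u) \<subseteq> \<phi> ` cA u"
    proof
      fix b assume "b \<in> cB (\<phi> u)"
      then obtain v where "v \<in> A" "b = \<phi> v" "S\<^sup>*\<^sup>* (\<phi> u) (\<phi> v)" unfolding cB_def using surj by auto
      then show "b \<in> \<phi> ` cA u" using iff that unfolding cA_def by auto
    qed
  qed
  have inj: "inj_on (\<lambda>C. \<phi> ` C) (cA ` A)"
  proof (rule inj_onI)
    fix C1 C2 assume "C1 \<in> cA ` A" "C2 \<in> cA ` A" and eq: "\<phi> ` C1 = \<phi> ` C2"
    then obtain u1 u2 where u: "u1 \<in> A" "u2 \<in> A" "C1 = cA u1" "C2 = cA u2" by auto
    have e: "cB (\<phi> u1) = cB (\<phi> u2)" using eq img u by simp
    show "C1 = C2"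
    proof -
      have "v \<in> cA u1 \<longleftrightarrow> v \<in> cA u2" for v
      proof -
        have "v \<in> cA u1 \<longleftrightarrow> v \<in> A \<and> \<phi> v \<in> cB (\<phi> u1)"
          using iff u surj unfolding cA_def cB_def by auto
        also have "\<dots> \<longleftrightarrow> v \<in> A \<and> \<phi> v \<in> cB (\<phi> u2)" using e by simp
        also have "\<dots> \<longleftrightarrow> v \<in> cA u2"
          using iff u surj unfolding cA_def cB_def by auto
        finally show ?thesis .
      qed
      then show ?thesis using u by auto
    qed
  qed
  have im2: "(\<lambda>C. \<phi> ` C) ` (cA ` A) = cB ` B"
    using img surj by (auto simp: image_image)
  have "ncomp A R = card (cA ` A)" unfolding ncomp_def cA_def by simp
  also have "\<dots> = card ((\<lambda>C. \<phi> ` C) ` (cA ` A))" using card_image[OF inj] by simp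
  also have "\<dots> = card (cB ` B)" using im2 by simp
  also have "\<dots> = ncomp B S" unfolding ncomp_def cB_def by simp
  finally show ?thesis .
qed

lemma ncomp_isolated:
  assumes "z \<notin> B" "finite B" "\<And>a b. R a b \<Longrightarrow> a \<in> B \<and> b \<in> B"
  shows "ncomp (insert z B) (\<lambda>a b. R a b \<or> (a = z \<and> b = z)) = Suc (ncomp B R)"
proof -
  define S where "S = (\<lambda>a b. R a b \<or> (a = z \<and> b = z))"
  have s1: "S\<^sup>*\<^sup>* u v \<Longrightarrow> u \<noteq> z \<Longrightarrow> v \<noteq> z \<and> R\<^sup>*\<^sup>* u v" for u v
  proof (induction rule: rtranclp_induct)
    case base then show ?case by simp
  next
    case (step y w) then show ?case using assms(1,3) unfolding S_def
      by (metis rtranclp.rtrancl_into_rtrancl)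
  qed
  have s2: "S\<^sup>*\<^sup>* z v \<Longrightarrow> v = z" for v
  proof (induction rule: rtranclp_induct)
    case base then show ?case by simp
  next
    case (step y w) then show ?case using assms(1,3) unfolding S_def by blast
  qed
  have mono: "R\<^sup>*\<^sup>* u v \<Longrightarrow> S\<^sup>*\<^sup>* u v" for u v
    by (erule rtranclp_mono[THEN predicate2D, rotated]) (auto simp: S_def)
  have c1: "{v \<in> insert z B. S\<^sup>*\<^sup>* u v} = {v \<in> B. R\<^sup>*\<^sup>* u v}" if "u \<in> B" for u
    using s1 mono that assms(1) by auto
  have c2: "{v \<in> insert z B. S\<^sup>*\<^sup>* z v} = {z}" using s2 by auto
  have eq: "(\<lambda>u. {v \<in> insert z B. S\<^sup>*\<^sup>* u v}) ` insert z B
      = insert {z} ((\<lambda>u. {v \<in> B. R\<^sup>*\<^sup>* u v}) ` B)"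
    using c1 c2 by auto
  have nin: "{z} \<notin> (\<lambda>u. {v \<in> B. R\<^sup>*\<^sup>* u v}) ` B" using assms(1) by auto
  show ?thesis unfolding ncomp_def S_def[symmetric] eq
    using nin assms(2) by simp
qed

definition E :: "(nat \<times> bool) list \<Rightarrow> nat \<times> nat \<Rightarrow> nat \<times> nat \<Rightarrow> bool" where
  "E cs u v \<longleftrightarrow>
     (\<exists>t p. t < length cs \<and> u = (t, p) \<and> v = (Suc t, p) \<and>
        ((p \<noteq> fst (cs!t) \<and> p \<noteq> Suc (fst (cs!t))) \<or> \<not> snd (cs!t))) \<or>
     (\<exists>t. t < length cs \<and> snd (cs!t) \<and>
        ((u = (t, fst (cs!t)) \<and> v = (t, Suc (fst (cs!t)))) \<or>
         (u = (Suc t, fst (cs!t)) \<and> v = (Suc t, Suc (fst (cs!t)))))) \<or>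
     (\<exists>p. u = (length cs, p) \<and> v = (0, p))"

definition pts :: "nat \<Rightarrow> nat \<Rightarrow> (nat \<times> nat) set" where
  "pts n m = {0..m} \<times> {1..n}"

definition Rel :: "nat \<Rightarrow> (nat \<times> bool) list \<Rightarrow> nat \<times> nat \<Rightarrow> nat \<times> nat \<Rightarrow> bool" where
  "Rel n cs u v \<longleftrightarrow> u \<in> pts n (length cs) \<and> v \<in> pts n (length cs) \<and> (E cs u v \<or> E cs v u)"

definition ncount :: "nat \<Rightarrow> (nat \<times> bool) list \<Rightarrow> nat" where
  "ncount n cs = ncomp (pts n (length cs)) (Rel n cs)"

lemma E_vert: "t < length cs \<Longrightarrow> (p \<noteq> fst (cs!t) \<and> p \<noteq> Suc (fst (cs!t))) \<or> \<not> snd (cs!t)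
   \<Longrightarrow> E cs (t, p) (Suc t, p)"
  unfolding E_def by blast
lemma E_hor1: "t < length cs \<Longrightarrow> snd (cs!t) \<Longrightarrow> fst (cs!t) = i \<Longrightarrow> E cs (t, i) (t, Suc i)"
  unfolding E_def by blast
lemma E_hor2: "t < length cs \<Longrightarrow> snd (cs!t) \<Longrightarrow> fst (cs!t) = i \<Longrightarrow> E cs (Suc t, i) (Suc t, Suc i)"
  unfolding E_def by blast
lemma E_clos: "m = length cs \<Longrightarrow> E cs (m, p) (0, p)"
  unfolding E_def by blast

lemma E_cases:
  assumes "E cs u v"
  obtains (vert) t p where "t < length cs" "u = (t, p)" "v = (Suc t, p)"
      "(p \<noteq> fst (cs!t) \<and> p \<noteq> Suc (fst (cs!t))) \<or> \<not> snd (cs!t)"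
  | (hor1) t where "t < length cs" "snd (cs!t)" "u = (t, fst (cs!t))" "v = (t, Suc (fst (cs!t)))"
  | (hor2) t where "t < length cs" "snd (cs!t)" "u = (Suc t, fst (cs!t))" "v = (Suc t, Suc (fst (cs!t)))"
  | (clos) p where "u = (length cs, p)" "v = (0, p)"
  using assms unfolding E_def by blast

lemma Rel_sym: "Rel n cs u v \<Longrightarrow> Rel n cs v u"
  unfolding Rel_def by blast

lemma rtranclp_sym_Rel: "(Rel n cs)\<^sup>*\<^sup>* u v \<Longrightarrow> (Rel n cs)\<^sup>*\<^sup>* v u"
proof (induction rule: rtranclp_induct)
  case base then show ?case by simp
next
  case (step y z) then show ?case by (meson Rel_sym converse_rtranclp_into_rtranclp)
qed

lemma edge_Rel: "E cs x y \<Longrightarrow> x \<in> pts n (length cs) \<Longrightarrow> y \<in> pts n (length cs) \<Longrightarrow> (Rel n cs)\<^sup>*\<^sup>* x y"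
  unfolding Rel_def by (intro r_into_rtranclp) blast

lemma edge_Rel': "E cs y x \<Longrightarrow> x \<in> pts n (length cs) \<Longrightarrow> y \<in> pts n (length cs) \<Longrightarrow> (Rel n cs)\<^sup>*\<^sup>* x y"
  unfolding Rel_def by (intro r_into_rtranclp) blast

lemma nth_ins1: "t < length xs \<Longrightarrow> (xs @ x # ys) ! t = (xs @ ys) ! t"
  by (simp add: nth_append)
lemma nth_ins2: "length xs \<le> t \<Longrightarrow> (xs @ x # ys) ! Suc t = (xs @ ys) ! t"
  by (simp add: nth_append Suc_diff_le)
lemma nth_ins0: "(xs @ x # ys) ! length xs = x"
  by simp

lemma pts_mem: "(t, p) \<in> pts n m \<longleftrightarrow> t \<le> m \<and> 1 \<le> p \<and> p \<le> n"
  unfolding pts_def by auto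

lemma finite_pts: "finite (pts n m)" unfolding pts_def by simp

lemma bex2I: "x \<in> A \<Longrightarrow> y \<in> B \<Longrightarrow> P x y \<Longrightarrow> \<exists>x\<in>A. \<exists>y\<in>B. P x y"
  by blast

lemma ncount_V:
  "ncount n (xs @ (i, False) # ys) = ncount n (xs @ ys)"
proof -
  define cs' where "cs' = xs @ (i, False) # ys"
  define cs where "cs = xs @ ys"
  define t0 where "t0 = length xs"
  define m where "m = length cs"
  have lens: "length cs' = Suc m" "t0 \<le> m" "length cs = m" unfolding cs'_def cs_def m_def t0_def by auto
  have n1: "t < t0 \<Longrightarrow> cs' ! t = cs ! t" for t unfolding cs'_def cs_def t0_def by (simp add: nth_append)
  have n2: "t0 \<le> t \<Longrightarrow> cs' ! Suc t = cs ! t" for t unfolding cs'_def cs_def t0_def by (simp add: nth_ins2)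
  have n0: "cs' ! t0 = (i, False)" unfolding cs'_def t0_def by simp
  define \<phi> :: "nat \<times> nat \<Rightarrow> nat \<times> nat" where "\<phi> = (\<lambda>(t, p). (if t \<le> t0 then t else t - 1, p))"
  have phi: "\<phi> (t, p) = (if t \<le> t0 then t else t - 1, p)" for t p unfolding \<phi>_def by simp
  have inB: "\<phi> x \<in> pts n m" if "x \<in> pts n (Suc m)" for x
    using that lens by (cases x) (auto simp: phi pts_mem)
  have "ncomp (pts n (length cs')) (Rel n cs') = ncomp (pts n m) (Rel n cs)"
  proof (rule ncomp_map[where \<phi> = \<phi>])
    show "\<phi> ` pts n (length cs') = pts n m"
    proof
      show "\<phi> ` pts n (length cs') \<subseteq> pts n m" using inB lens by auto
      show "pts n m \<subseteq> \<phi> ` pts n (length cs')"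
      proof
        fix x assume x: "x \<in> pts n m"
        obtain t p where tp: "x = (t, p)" by (cases x)
        show "x \<in> \<phi> ` pts n (length cs')"
        proof (cases "t \<le> t0")
          case True then show ?thesis using x tp lens
            by (intro image_eqI[where x = "(t, p)"]) (auto simp: phi pts_mem)
        next
          case False then show ?thesis using x tp lens
            by (intro image_eqI[where x = "(Suc t, p)"]) (auto simp: phi pts_mem)
        qed
      qed
    qed
  next
    have key: "\<phi> x = \<phi> y \<or> E cs (\<phi> x) (\<phi> y)" if e: "E cs' x y" for x y
      using e
    proof (cases rule: E_cases)
      case (vert t p)
      consider "t < t0" | "t = t0" | "t0 < t" by linarith
      then show ?thesis
      proof cases
        case 1 then show ?thesis using vert n1[of t] lens
          by (auto simp: phi intro!: E_vert)
      next
        case 2 then show ?thesis using vert by (simp add: phi)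
      next
        case 3
        then obtain t' where t': "t = Suc t'" "t0 \<le> t'" by (cases t) auto
        then show ?thesis using vert n2[of t'] lens by (auto simp: phi intro!: E_vert)
      qed
    next
      case (hor1 t)
      consider "t < t0" | "t = t0" | "t0 < t" by linarith
      then show ?thesis
      proof cases
        case 1 then show ?thesis using hor1 n1[of t] lens
          by (auto simp: phi intro!: E_hor1)
      next
        case 2 then show ?thesis using hor1 n0 by simp
      next
        case 3
        then obtain t' where t': "t = Suc t'" "t0 \<le> t'" by (cases t) auto
        then show ?thesis using hor1 n2[of t'] lens by (auto simp: phi intro!: E_hor1)
      qed
    next
      case (hor2 t)
      consider "t < t0" | "t = t0" | "t0 < t" by linarith
      then show ?thesis
      proof cases
        case 1 then show ?thesis using hor2 n1[of t] lens
          by (auto simp: phi intro!: E_hor2)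
      next
        case 2 then show ?thesis using hor2 n0 by simp
      next
        case 3
        then obtain t' where t': "t = Suc t'" "t0 \<le> t'" by (cases t) auto
        then show ?thesis using hor2 n2[of t'] lens by (auto simp: phi intro!: E_hor2)
      qed
    next
      case (clos p)
      then show ?thesis using lens by (auto simp: phi intro!: E_clos)
    qed
    fix x y assume r: "Rel n cs' x y"
    then have xy: "x \<in> pts n (Suc m)" "y \<in> pts n (Suc m)" using lens unfolding Rel_def by auto
    from r have dis: "E cs' x y \<or> E cs' y x" unfolding Rel_def by auto
    have px: "\<phi> x \<in> pts n (length cs)" "\<phi> y \<in> pts n (length cs)"
      using inB[OF xy(1)] inB[OF xy(2)] lens by auto
    from dis show "(Rel n cs)\<^sup>*\<^sup>* (\<phi> x) (\<phi> y)"
    proof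
      assume "E cs' x y"
      then have "\<phi> x = \<phi> y \<or> E cs (\<phi> x) (\<phi> y)" by (rule key)
      then show ?thesis using edge_Rel[of cs "\<phi> x" "\<phi> y" n] px by auto
    next
      assume "E cs' y x"
      then have "\<phi> y = \<phi> x \<or> E cs (\<phi> y) (\<phi> x)" by (rule key)
      then show ?thesis using edge_Rel'[of cs "\<phi> y" "\<phi> x" n] px by auto
    qed
  next
    have key: "\<exists>x\<in>pts n (length cs'). \<exists>y\<in>pts n (length cs'). \<phi> x = a \<and> \<phi> y = b \<and> E cs' x y"
      if e: "E cs a b" and ab: "a \<in> pts n m" "b \<in> pts n m" for a b
      using e
    proof (cases rule: E_cases)
      case (vert t p)
      show ?thesis
      proof (cases "t < t0")
        case True
          show ?thesis
          by (rule bex2I[where x = "(t, p)" and y = "(Suc t, p)"]) (use True vert n1[of t] lens ab in \<open>auto simp: phi pts_mem intro!: E_vert\<close>)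
      next
        case False
          show ?thesis
          by (rule bex2I[where x = "(Suc t, p)" and y = "(Suc (Suc t), p)"]) (use False vert n2[of t] lens ab in \<open>auto simp: phi pts_mem intro!: E_vert\<close>)
      qed
    next
      case (hor1 t)
      show ?thesis
      proof (cases "t < t0")
        case True
          show ?thesis
          by (rule bex2I[where x = "(t, fst (cs!t))" and y = "(t, Suc (fst (cs!t)))"]) (use True hor1 n1[of t] lens ab in \<open>auto simp: phi pts_mem intro!: E_hor1\<close>)
      next
        case False
          show ?thesis
          by (rule bex2I[where x = "(Suc t, fst (cs!t))" and y = "(Suc t, Suc (fst (cs!t)))"]) (use False hor1 n2[of t] lens ab in \<open>auto simp: phi pts_mem intro!: E_hor1\<close>)
      qed
    next
      case (hor2 t)
      show ?thesis
      proof (cases "t < t0")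
        case True
          show ?thesis
          by (rule bex2I[where x = "(Suc t, fst (cs!t))" and y = "(Suc t, Suc (fst (cs!t)))"]) (use True hor2 n1[of t] lens ab in \<open>auto simp: phi pts_mem intro!: E_hor2\<close>)
      next
        case False
          show ?thesis
          by (rule bex2I[where x = "(Suc (Suc t), fst (cs!t))" and y = "(Suc (Suc t), Suc (fst (cs!t)))"]) (use False hor2 n2[of t] lens ab in \<open>auto simp: phi pts_mem intro!: E_hor2\<close>)
      qed
    next
      case (clos p)
      show ?thesis
        by (rule bex2I[where x = "(Suc m, p)" and y = "(0, p)"]) (use clos lens ab in \<open>auto simp: phi pts_mem intro!: E_clos\<close>)
    qed
    fix a b assume r: "Rel n cs a b"
    then have ab: "a \<in> pts n m" "b \<in> pts n m" unfolding Rel_def m_def by auto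
    from r have "E cs a b \<or> E cs b a" unfolding Rel_def by auto
    then show "\<exists>x\<in>pts n (length cs'). \<exists>y\<in>pts n (length cs'). \<phi> x = a \<and> \<phi> y = b \<and> (Rel n cs')\<^sup>*\<^sup>* x y"
    proof
      assume "E cs a b"
      then obtain x y where "x\<in>pts n (length cs')" "y\<in>pts n (length cs')" "\<phi> x = a" "\<phi> y = b" "E cs' x y"
        using key ab by blast
      then show ?thesis using edge_Rel by blast
    next
      assume "E cs b a"
      then obtain x y where "x\<in>pts n (length cs')" "y\<in>pts n (length cs')" "\<phi> x = b" "\<phi> y = a" "E cs' x y"
        using key ab by blast
      then show ?thesis using edge_Rel' by blast
    qed
  next
    fix x y assume x: "x \<in> pts n (length cs')" and y: "y \<in> pts n (length cs')" and eq: "\<phi> x = \<phi> y"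
    obtain tx px where tx: "x = (tx, px)" by (cases x)
    obtain ty py where ty: "y = (ty, py)" by (cases y)
    have vt: "E cs' (t0, p) (Suc t0, p)" for p using lens n0 by (intro E_vert) auto
    have "x = y \<or> (x = (t0, px) \<and> y = (Suc t0, px)) \<or> (y = (t0, px) \<and> x = (Suc t0, px))"
      using eq tx ty by (auto simp: phi split: if_splits)
    then show "(Rel n cs')\<^sup>*\<^sup>* x y"
      using vt x y edge_Rel[of cs'] edge_Rel'[of cs'] by auto
  qed
  then show ?thesis unfolding ncount_def cs'_def cs_def m_def by simp
qed

lemma ncount_H:
  assumes i: "1 \<le> i" "i < n"
  shows "ncount n (xs @ (i, True) # (i, True) # ys) = Suc (ncount n (xs @ (i, True) # ys))"
proof -
  define cs' where "cs' = xs @ (i, True) # (i, True) # ys"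
  define cs where "cs = xs @ (i, True) # ys"
  define t0 where "t0 = length xs"
  define m where "m = length cs"
  define z :: "nat \<times> nat" where "z = (0, 0)"
  have lens: "length cs' = Suc m" "Suc t0 \<le> m" "length cs = m" unfolding cs'_def cs_def m_def t0_def by auto
  have n1: "t < t0 \<Longrightarrow> cs' ! t = cs ! t" for t unfolding cs'_def cs_def t0_def by (simp add: nth_append)
  have n2: "t0 \<le> t \<Longrightarrow> cs' ! Suc t = cs ! t" for t unfolding cs'_def cs_def t0_def by (simp add: nth_ins2)
  have n0: "cs' ! t0 = (i, True)" "cs ! t0 = (i, True)" unfolding cs'_def cs_def t0_def by simp_all
  have n0': "cs' ! Suc t0 = (i, True)" using n2[of t0] n0 by simp
  define \<phi> :: "nat \<times> nat \<Rightarrow> nat \<times> nat" where "\<phi> = (\<lambda>(t, p). if t \<le> t0 then (t, p) else if t = Suc t0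
      then (if p = i \<or> p = Suc i then z else (t0, p)) else (t - 1, p))"
  have phi: "\<phi> (t, p) = (if t \<le> t0 then (t, p) else if t = Suc t0
      then (if p = i \<or> p = Suc i then z else (t0, p)) else (t - 1, p))" for t p unfolding \<phi>_def by simp
  define S where "S = (\<lambda>a b. Rel n cs a b \<or> (a = z \<and> b = z))"
  have z: "z \<notin> pts n m" unfolding z_def pts_def by auto
  have inB: "\<phi> x \<in> insert z (pts n m)" if "x \<in> pts n (Suc m)" for x
    using that lens by (cases x) (auto simp: phi pts_mem)
  have SR: "S a b \<Longrightarrow> S b a" for a b unfolding S_def using Rel_sym by blast
  have "ncomp (pts n (length cs')) (Rel n cs') = ncomp (insert z (pts n m)) S"
  proof (rule ncomp_map[where \<phi> = \<phi>])
    show "\<phi> ` pts n (length cs') = insert z (pts n m)"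
    proof
      show "\<phi> ` pts n (length cs') \<subseteq> insert z (pts n m)" using inB unfolding lens(1) by blast
      show "insert z (pts n m) \<subseteq> \<phi> ` pts n (length cs')"
      proof
        fix x assume x: "x \<in> insert z (pts n m)"
        show "x \<in> \<phi> ` pts n (length cs')"
        proof (cases "x = z")
          case True then show ?thesis using lens i
            by (intro image_eqI[where x = "(Suc t0, i)"]) (auto simp: phi pts_mem)
        next
          case False
          then have x: "x \<in> pts n m" using x by auto
          obtain t p where tp: "x = (t, p)" by (cases x)
          show ?thesis
          proof (cases "t \<le> t0")
            case True then show ?thesis using x tp lens
              by (intro image_eqI[where x = "(t, p)"]) (auto simp: phi pts_mem)
          next
            case False then show ?thesis using x tp lens
              by (intro image_eqI[where x = "(Suc t, p)"]) (auto simp: phi pts_mem)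
          qed
        qed
      qed
    qed
  next
    have key: "\<phi> x = \<phi> y \<or> S (\<phi> x) (\<phi> y)" if e: "E cs' x y" and xy: "x \<in> pts n (Suc m)" "y \<in> pts n (Suc m)" for x y
      using e
    proof (cases rule: E_cases)
      case (vert t p)
      have pp: "1 \<le> p" "p \<le> n" using xy vert by (auto simp: pts_mem)
      consider "t < t0" | "t = t0" | "t = Suc t0" | "Suc t0 < t" by linarith
      then show ?thesis
      proof cases
        case 1 then show ?thesis using vert n1[of t] lens pp
          by (auto simp: phi S_def Rel_def pts_mem intro!: E_vert)
      next
        case 2 then show ?thesis using vert n0 by (simp add: phi)
      next
        case 3 then show ?thesis using vert n0 n0' lens pp
          by (auto simp: phi S_def Rel_def pts_mem intro!: E_vert)
      next
        case 4
        then obtain t' where t': "t = Suc t'" "Suc t0 \<le> t'" by (cases t) auto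
        then show ?thesis using vert n2[of t'] lens pp by (auto simp: phi S_def Rel_def pts_mem intro!: E_vert)
      qed
    next
      case (hor1 t)
      have pp: "1 \<le> fst (cs'!t)" "Suc (fst (cs'!t)) \<le> n" using xy hor1 by (auto simp: pts_mem)
      consider "t < t0" | "t = t0" | "t = Suc t0" | "Suc t0 < t" by linarith
      then show ?thesis
      proof cases
        case 1 then show ?thesis using hor1 n1[of t] lens pp
          by (auto simp: phi S_def Rel_def pts_mem intro!: E_hor1)
      next
        case 2 then show ?thesis using hor1 n0 lens pp
          by (auto simp: phi S_def Rel_def pts_mem intro!: E_hor1)
      next
        case 3 then show ?thesis using hor1 n0' by (simp add: phi S_def)
      next
        case 4
        then obtain t' where t': "t = Suc t'" "Suc t0 \<le> t'" by (cases t) auto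
        then show ?thesis using hor1 n2[of t'] lens pp by (auto simp: phi S_def Rel_def pts_mem intro!: E_hor1)
      qed
    next
      case (hor2 t)
      have pp: "1 \<le> fst (cs'!t)" "Suc (fst (cs'!t)) \<le> n" using xy hor2 by (auto simp: pts_mem)
      consider "t < t0" | "t = t0" | "t = Suc t0" | "Suc t0 < t" by linarith
      then show ?thesis
      proof cases
        case 1 then show ?thesis using hor2 n1[of t] lens pp
          by (auto simp: phi S_def Rel_def pts_mem intro!: E_hor2)
      next
        case 2 then show ?thesis using hor2 n0 by (simp add: phi S_def)
      next
        case 3 then show ?thesis using hor2 n0 n0' lens pp
          by (auto simp: phi S_def Rel_def pts_mem intro!: E_hor2)
      next
        case 4
        then obtain t' where t': "t = Suc t'" "Suc t0 \<le> t'" by (cases t) auto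
        then show ?thesis using hor2 n2[of t'] lens pp by (auto simp: phi S_def Rel_def pts_mem intro!: E_hor2)
      qed
    next
      case (clos p)
      have pp: "1 \<le> p" "p \<le> n" using xy clos by (auto simp: pts_mem)
      then show ?thesis using lens clos by (auto simp: phi S_def Rel_def pts_mem intro!: E_clos)
    qed
    fix x y assume r: "Rel n cs' x y"
    then have xy: "x \<in> pts n (Suc m)" "y \<in> pts n (Suc m)" using lens unfolding Rel_def by auto
    from r have dis: "E cs' x y \<or> E cs' y x" unfolding Rel_def by auto
    from dis show "S\<^sup>*\<^sup>* (\<phi> x) (\<phi> y)"
    proof
      assume "E cs' x y"
      then have "\<phi> x = \<phi> y \<or> S (\<phi> x) (\<phi> y)" using key xy by blast
      then show ?thesis by auto
    next
      assume "E cs' y x"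
      then have "\<phi> y = \<phi> x \<or> S (\<phi> y) (\<phi> x)" using key xy by blast
      then show ?thesis using SR[of "\<phi> y" "\<phi> x"] by auto
    qed
  next
    have key: "\<exists>x\<in>pts n (length cs'). \<exists>y\<in>pts n (length cs'). \<phi> x = a \<and> \<phi> y = b \<and> E cs' x y"
      if e: "E cs a b" and ab: "a \<in> pts n m" "b \<in> pts n m" for a b
      using e
    proof (cases rule: E_cases)
      case (vert t p)
      consider "t < t0" | "t = t0" | "t0 < t" by linarith
      then show ?thesis
      proof cases
        case 1
          show ?thesis
          by (rule bex2I[where x = "(t, p)" and y = "(Suc t, p)"]) (use 1 vert n1[of t] lens ab in \<open>auto simp: phi pts_mem intro!: E_vert\<close>)
      next
        case 2
          show ?thesis
          by (rule bex2I[where x = "(Suc t, p)" and y = "(Suc (Suc t), p)"]) (use 2 vert n0 n0' lens ab in \<open>auto simp: phi pts_mem intro!: E_vert\<close>)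
      next
        case 3
          show ?thesis
          by (rule bex2I[where x = "(Suc t, p)" and y = "(Suc (Suc t), p)"]) (use 3 vert n2[of t] lens ab in \<open>auto simp: phi pts_mem intro!: E_vert\<close>)
      qed
    next
      case (hor1 t)
      consider "t < t0" | "t = t0" | "t0 < t" by linarith
      then show ?thesis
      proof cases
        case 1
          show ?thesis
          by (rule bex2I[where x = "(t, fst (cs!t))" and y = "(t, Suc (fst (cs!t)))"]) (use 1 hor1 n1[of t] lens ab in \<open>auto simp: phi pts_mem intro!: E_hor1\<close>)
      next
        case 2
          show ?thesis
          by (rule bex2I[where x = "(t, fst (cs!t))" and y = "(t, Suc (fst (cs!t)))"]) (use 2 hor1 n0 lens ab in \<open>auto simp: phi pts_mem intro!: E_hor1\<close>)
      next
        case 3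
          show ?thesis
          by (rule bex2I[where x = "(Suc t, fst (cs!t))" and y = "(Suc t, Suc (fst (cs!t)))"]) (use 3 hor1 n2[of t] lens ab in \<open>auto simp: phi pts_mem intro!: E_hor1\<close>)
      qed
    next
      case (hor2 t)
      consider "t < t0" | "t0 \<le> t" by linarith
      then show ?thesis
      proof cases
        case 1
          show ?thesis
          by (rule bex2I[where x = "(Suc t, fst (cs!t))" and y = "(Suc t, Suc (fst (cs!t)))"]) (use 1 hor2 n1[of t] lens ab in \<open>auto simp: phi pts_mem intro!: E_hor2\<close>)
      next
        case 2
          show ?thesis
          by (rule bex2I[where x = "(Suc (Suc t), fst (cs!t))" and y = "(Suc (Suc t), Suc (fst (cs!t)))"]) (use 2 hor2 n2[of t] lens ab in \<open>auto simp: phi pts_mem intro!: E_hor2\<close>)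
      qed
    next
      case (clos p)
      show ?thesis
        by (rule bex2I[where x = "(Suc m, p)" and y = "(0, p)"]) (use clos lens ab in \<open>auto simp: phi pts_mem intro!: E_clos\<close>)
    qed
    fix a b assume s: "S a b"
    show "\<exists>x\<in>pts n (length cs'). \<exists>y\<in>pts n (length cs'). \<phi> x = a \<and> \<phi> y = b \<and> (Rel n cs')\<^sup>*\<^sup>* x y"
    proof (cases "a = z \<and> b = z")
      case True then show ?thesis using lens i
        by (intro bexI[where x = "(Suc t0, i)"]) (auto simp: phi pts_mem)
    next
      case False
      then have r: "Rel n cs a b" using s unfolding S_def by auto
      then have ab: "a \<in> pts n m" "b \<in> pts n m" unfolding Rel_def m_def by auto
      from r have "E cs a b \<or> E cs b a" unfolding Rel_def by auto
      then show ?thesis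
      proof
        assume "E cs a b"
        then obtain x y where "x\<in>pts n (length cs')" "y\<in>pts n (length cs')" "\<phi> x = a" "\<phi> y = b" "E cs' x y"
          using key ab by blast
        then show ?thesis using edge_Rel by blast
      next
        assume "E cs b a"
        then obtain x y where "x\<in>pts n (length cs')" "y\<in>pts n (length cs')" "\<phi> x = b" "\<phi> y = a" "E cs' x y"
          using key ab by blast
        then show ?thesis using edge_Rel' by blast
      qed
    qed
  next
    fix x y assume x: "x \<in> pts n (length cs')" and y: "y \<in> pts n (length cs')" and eq: "\<phi> x = \<phi> y"
    obtain tx px where tx: "x = (tx, px)" by (cases x)
    obtain ty py where ty: "y = (ty, py)" by (cases y)
    have p1: "1 \<le> px" "1 \<le> py" using x y tx ty by (auto simp: pts_mem)
    have vt: "E cs' (t0, p) (Suc t0, p)" if "p \<noteq> i" "p \<noteq> Suc i" for p using lens n0 that by (intro E_vert) auto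
    have ht: "E cs' (Suc t0, i) (Suc t0, Suc i)" using lens n0 by (intro E_hor2) auto
    have "x = y \<or> (x = (t0, px) \<and> y = (Suc t0, px) \<and> px \<noteq> i \<and> px \<noteq> Suc i)
        \<or> (y = (t0, px) \<and> x = (Suc t0, px) \<and> px \<noteq> i \<and> px \<noteq> Suc i)
        \<or> (x = (Suc t0, i) \<and> y = (Suc t0, Suc i)) \<or> (y = (Suc t0, i) \<and> x = (Suc t0, Suc i))"
      using eq tx ty p1 by (auto simp: phi z_def split: if_splits)
    then show "(Rel n cs')\<^sup>*\<^sup>* x y"
      using vt ht x y edge_Rel[of cs'] edge_Rel'[of cs'] by auto
  qed
  also have "\<dots> = Suc (ncomp (pts n m) (Rel n cs))"
    unfolding S_def
    by (rule ncomp_isolated[OF z finite_pts]) (auto simp: Rel_def m_def)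
  finally show ?thesis unfolding ncount_def cs'_def cs_def m_def by simp
qed

definition cl :: "letter list \<Rightarrow> bool list \<Rightarrow> (nat \<times> bool) list" where
  "cl w st = map (\<lambda>(l, x). (fst l, x = snd l)) (zip w st)"

lemma cl_nth: "length st = length w \<Longrightarrow> t < length w \<Longrightarrow> cl w st ! t = (fst (w!t), st!t = snd (w!t))"
  unfolding cl_def by simp

lemma cl_length: "length st = length w \<Longrightarrow> length (cl w st) = length w"
  unfolding cl_def by simp

lemma smooth_edge_E: "length st = length w \<Longrightarrow> smooth_edge w st u v = E (cl w st) u v"
  unfolding smooth_edge_def E_def by (simp add: cl_nth cl_length cong: conj_cong)

lemma num_loops_ncount: "length st = length w \<Longrightarrow> num_loops n w st = ncount n (cl w st)"
proof -
  assume l: "length st = length w"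
  have "state_rel n w st = Rel n (cl w st)"
    by (intro ext) (simp add: state_rel_def Rel_def smooth_edge_E[OF l] cl_length[OF l] diag_points_def pts_def)
  then show ?thesis unfolding num_loops_def ncount_def ncomp_def
    by (simp add: cl_length[OF l] diag_points_def pts_def)
qed

lemma cl_append: "length u = length P \<Longrightarrow> cl (P @ Q) (u @ v) = cl P u @ cl Q v"
  unfolding cl_def by simp

lemma cl_replicate: "length b = e \<Longrightarrow> cl (replicate e (i, True)) b = map (Pair i) b"
  unfolding cl_def by (simp add: zip_replicate1)

lemma ncount_block:
  assumes i: "1 \<le> i" "i < n"
  shows "ncount n (xs @ map (Pair i) b @ ys) =
    (if True \<in> set b then ncount n (xs @ (i, True) # ys) + count_list b True - 1 else ncount n (xs @ ys))"
  using i
proof (induction b arbitrary: xs)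
  case Nil then show ?case by simp
next
  case (Cons x b)
  show ?case
  proof (cases x)
    case False
    have "ncount n (xs @ map (Pair i) (x # b) @ ys) = ncount n (xs @ (i, False) # (map (Pair i) b @ ys))"
      using False by simp
    also have "\<dots> = ncount n (xs @ map (Pair i) b @ ys)" by (rule ncount_V)
    finally show ?thesis using Cons False by simp
  next
    case True
    have "ncount n (xs @ map (Pair i) (x # b) @ ys) = ncount n ((xs @ [(i, True)]) @ map (Pair i) b @ ys)"
      using True by simp
    also have "\<dots> = (if True \<in> set b then ncount n ((xs @ [(i, True)]) @ (i, True) # ys) + count_list b True - 1
        else ncount n ((xs @ [(i, True)]) @ ys))" by (rule Cons.IH[OF i])
    also have "\<dots> = ncount n (xs @ (i, True) # ys) + count_list (x # b) True - 1"
    proof (cases "True \<in> set b")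
      case True
      then have "count_list b True \<noteq> 0" by (simp add: count_list_0_iff)
      then show ?thesis using True \<open>x\<close> ncount_H[OF i, of xs ys] by simp
    next
      case False
      then have "count_list b True = 0" by (simp add: count_list_0_iff)
      then show ?thesis using False \<open>x\<close> by simp
    qed
    finally show ?thesis using True by simp
  qed
qed

lemma ncount_pos: "1 \<le> n \<Longrightarrow> 1 \<le> ncount n cs"
proof -
  assume "1 \<le> n"
  then have "(0, 1) \<in> pts n (length cs)" by (simp add: pts_mem)
  then have ne: "(\<lambda>u. {v \<in> pts n (length cs). (Rel n cs)\<^sup>*\<^sup>* u v}) ` pts n (length cs) \<noteq> {}" by auto
  have "finite ((\<lambda>u. {v \<in> pts n (length cs). (Rel n cs)\<^sup>*\<^sup>* u v}) ` pts n (length cs))"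
    using finite_pts by simp
  then show ?thesis using ne unfolding ncount_def ncomp_def
    by (simp add: Suc_le_eq card_gt_0_iff)
qed

lemma ncount_le: "ncount n cs \<le> card (pts n (length cs))"
  unfolding ncount_def ncomp_def by (rule card_image_le[OF finite_pts])

lemma card_pts: "card (pts n m) = Suc m * n"
  unfolding pts_def by simp

definition ds :: "int fls" where "ds = - monoA 1 - monoA (-1)"
definition sg :: "int \<Rightarrow> int fls" where "sg z = (if even z then 1 else -1)"
definition Len :: "nat \<Rightarrow> bool list set" where "Len m = {st. length st = m}"
definition cTF :: "bool list \<Rightarrow> int" where
  "cTF st = int (count_list st True) - int (count_list st False)"

lemma finite_Len: "finite (Len m)"
proof -
  have "Len m = {xs. set xs \<subseteq> (UNIV::bool set) \<and> length xs = m}" unfolding Len_def by auto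
  then show ?thesis using finite_lists_length_eq[of "UNIV::bool set"] by simp
qed

lemma card_Len: "card (Len m) = 2 ^ m"
proof -
  have "Len m = {xs. set xs \<subseteq> (UNIV::bool set) \<and> length xs = m}" unfolding Len_def by auto
  then show ?thesis using card_lists_length_eq[of "UNIV::bool set"] by simp
qed

lemma writhe_Cons: "writhe (l # w) = (if snd l then -1 else 1) + writhe w"
  unfolding writhe_def by simp

lemma writhe_Nil: "writhe [] = 0" unfolding writhe_def by simp

lemma writhe_append: "writhe (u @ v) = writhe u + writhe v"
  unfolding writhe_def by simp

lemma writhe_replicate_True: "writhe (replicate e (i, True)) = - int e"
  unfolding writhe_def by (induction e) auto

lemma writhe_parity: "even (writhe w + int (length w))"
  by (induction w) (auto simp: writhe_Cons writhe_Nil)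

lemma writhe_abs: "\<bar>writhe w\<bar> \<le> int (length w)"
  by (induction w) (auto simp: writhe_Cons writhe_Nil)

lemma count_TF: "count_list st True + count_list st False = length st"
  by (induction st) auto

lemma cTF_parity: "even (cTF st + int (length st))"
proof -
  have "cTF st + int (length st) = 2 * int (count_list st True)"
    using count_TF[of st] unfolding cTF_def by linarith
  then show ?thesis by simp
qed

lemma cTF_abs: "\<bar>cTF st\<bar> \<le> int (length st)"
  using count_TF[of st] unfolding cTF_def by linarith

lemma compose_power_sum:
  "finite A \<Longrightarrow> fls_compose_power (\<Sum>x\<in>A. f x) d = (\<Sum>x\<in>A. fls_compose_power (f x) d)"
  by (induction rule: finite_induct) auto

lemma compose_sg: "fls_compose_power (sg z) 2 = sg z"
  unfolding sg_def by simp

lemma compose_ds: "fls_compose_power ds 2 = loop_value"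
  unfolding ds_def loop_value_def by simp

lemma monoA_mult: "monoA a * monoA b = monoA (a + b)"
  by (rule fls_X_intpow_times_fls_X_intpow)

lemma nth_compose2: "fls_nth (fls_compose_power f 2) (2 * k) = fls_nth f k"
  by (simp add: fls_nth_compose_power)

lemma jones_formula:
  "jones n w = sg (writhe w) *
     (\<Sum>st\<in>Len (length w). monoA ((cTF st - 3 * writhe w) div 2) * ds ^ (num_loops n w st - 1))"
  (is "_ = ?J")
proof -
  have ev: "2 * ((cTF st - 3 * writhe w) div 2) = cTF st - 3 * writhe w" if "st \<in> Len (length w)" for st
  proof -
    have "even (cTF st - 3 * writhe w)"
      using writhe_parity[of w] cTF_parity[of st] that unfolding Len_def
      by (auto simp: even_add)
    then show ?thesis by simp
  qed
  have "fls_compose_power ?J 2 = sg (writhe w) *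
     (\<Sum>st\<in>Len (length w). monoA (2 * ((cTF st - 3 * writhe w) div 2)) * loop_value ^ (num_loops n w st - 1))"
    by (simp add: compose_power_sum finite_Len compose_sg compose_ds)
  also have "\<dots> = sg (writhe w) *
     (\<Sum>st\<in>Len (length w). monoA (cTF st - 3 * writhe w) * loop_value ^ (num_loops n w st - 1))"
    using ev by (intro arg_cong[where f = "\<lambda>x. sg (writhe w) * x"] sum.cong) auto
  also have "\<dots> = jones_A n w"
  proof -
    have "monoA (cTF st - 3 * writhe w) = monoA (- 3 * writhe w) * monoA (cTF st)" for st
      using monoA_mult[of "- 3 * writhe w" "cTF st"] by (simp add: algebra_simps)
    then show ?thesis
      unfolding jones_A_def kauffman_bracket_def sg_def Len_def cTF_def
      by (simp add: sum_distrib_left mult.assoc)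
  qed
  finally have c: "fls_compose_power ?J 2 = jones_A n w" .
  have "jones n w = Abs_fls (\<lambda>k. fls_nth ?J k)"
    unfolding jones_def c[symmetric]
    by (simp only: nth_compose2)
  then show ?thesis by (simp add: fls_nth_inverse)
qed

lemma nth_monoA_mult: "(monoA a * f) $$ k = f $$ (k - a)"
  by (simp add: fls_X_intpow_times_conv_shift)

lemma sum_shift_int: "(\<Sum>k\<in>{lo..hi::int}. g (k + c)) = (\<Sum>k\<in>{lo + c..hi + c}. g k)"
proof -
  have "(\<Sum>k\<in>{lo + c..hi + c}. g k) = (\<Sum>k\<in>(\<lambda>k. k + c) ` {lo..hi}. g k)" by simp
  also have "\<dots> = (\<Sum>k\<in>{lo..hi}. g (k + c))" by (subst sum.reindex) (auto simp: inj_on_def)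
  finally show ?thesis by simp
qed

lemma ds_nth_mult: "(ds * f) $$ k = - f $$ (k - 1) - f $$ (k + 1)"
proof -
  have "ds * f = - (monoA 1 * f) - (monoA (-1) * f)" unfolding ds_def by (simp add: algebra_simps)
  then show ?thesis by (simp only: fls_minus_nth fls_uminus_nth nth_monoA_mult) simp
qed

lemma ws_ds: "lo \<le> - int L \<Longrightarrow> int L \<le> hi \<Longrightarrow> (\<Sum>k\<in>{lo..hi}. (ds ^ L) $$ k) = (-2) ^ L"
proof (induction L arbitrary: lo hi)
  case 0
  have "(\<Sum>k\<in>{lo..hi}. (ds ^ 0) $$ k) = (\<Sum>k\<in>{lo..hi}. if k = 0 then 1 else 0)"
    by simp
  also have "\<dots> = 1" using 0 by simp
  finally show ?case by simp
next
  case (Suc L)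
  have "(\<Sum>k\<in>{lo..hi}. (ds ^ Suc L) $$ k)
      = - (\<Sum>k\<in>{lo..hi}. (ds ^ L) $$ (k + -1)) - (\<Sum>k\<in>{lo..hi}. (ds ^ L) $$ (k + 1))"
    by (simp add: ds_nth_mult sum_subtractf sum_negf)
  also have "\<dots> = - (\<Sum>k\<in>{lo + -1..hi + -1}. (ds ^ L) $$ k) - (\<Sum>k\<in>{lo + 1..hi + 1}. (ds ^ L) $$ k)"
    by (simp only: sum_shift_int)
  also have "\<dots> = - ((-2) ^ L) - (-2) ^ L"
    using Suc.prems by (simp add: Suc.IH)
  finally show ?case by simp
qed

lemma ws_term: "\<bar>a\<bar> + int L \<le> N \<Longrightarrow> (\<Sum>k\<in>{-N..N}. (monoA a * ds ^ L) $$ k) = (-2) ^ L"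
proof -
  assume h: "\<bar>a\<bar> + int L \<le> N"
  have "(\<Sum>k\<in>{-N..N}. (monoA a * ds ^ L) $$ k) = (\<Sum>k\<in>{-N..N}. (ds ^ L) $$ (k + - a))"
    by (simp add: nth_monoA_mult)
  also have "\<dots> = (\<Sum>k\<in>{-N + - a..N + - a}. (ds ^ L) $$ k)" by (rule sum_shift_int)
  also have "\<dots> = (-2) ^ L" using h by (intro ws_ds) auto
  finally show ?thesis .
qed

lemma num_loops_le: "num_loops n w st \<le> Suc (length w) * n"
proof -
  have "num_loops n w st \<le> card (diag_points n w)"
    unfolding num_loops_def by (rule card_image_le) (simp add: diag_points_def)
  then show ?thesis by (simp add: diag_points_def)
qed

lemma abs_div2: "\<bar>(x::int) div 2\<bar> \<le> \<bar>x\<bar>"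
proof -
  have a: "2 * (x div 2) \<le> x" "x < 2 * (x div 2) + 2"
    using div_mult_mod_eq[of x 2] pos_mod_bound[of 2 x] pos_mod_sign[of 2 x] by linarith+
  then show ?thesis by (auto simp: abs_if) 
qed

lemma pow2_mod3: "(2::int) ^ m mod 3 = 1 \<or> (2::int) ^ m mod 3 = 2"
proof (induction m)
  case 0 then show ?case by simp
next
  case (Suc m)
  have "(2::int) ^ Suc m mod 3 = (2 * ((2::int) ^ m mod 3)) mod 3" by (simp add: mod_mult_right_eq)
  then show ?case using Suc by auto
qed

lemma jones_nonzero:
  assumes n: "1 \<le> n"
  shows "jones n w \<noteq> 0"
proof
  assume j0: "jones n w = 0"
  define m where "m = length w"
  define N where "N = 4 * int m + int (Suc m * n)"
  define a where "a st = (cTF st - 3 * writhe w) div 2" for st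
  define L where "L st = num_loops n w st - 1" for st
  define F where "F = (\<Sum>st\<in>Len m. monoA (a st) * ds ^ L st)"
  have jf: "jones n w = sg (writhe w) * F"
    unfolding F_def a_def L_def m_def by (rule jones_formula)
  have bnd: "\<bar>a st\<bar> + int (L st) \<le> N" if "st \<in> Len m" for st
  proof -
    have "\<bar>a st\<bar> \<le> \<bar>cTF st - 3 * writhe w\<bar>" unfolding a_def by (rule abs_div2)
    also have "\<dots> \<le> 4 * int m"
      using cTF_abs[of st] writhe_abs[of w] that unfolding Len_def m_def by auto
    finally have "\<bar>a st\<bar> \<le> 4 * int m" .
    moreover have "L st \<le> Suc m * n" using num_loops_le[of n w st] unfolding L_def m_def by simp
    ultimately show ?thesis unfolding N_def by linarith
  qed
  have sF: "(\<Sum>k\<in>{-N..N}. F $$ k) = (\<Sum>st\<in>Len m. (-2) ^ L st)"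
  proof -
    have "(\<Sum>k\<in>{-N..N}. F $$ k) = (\<Sum>k\<in>{-N..N}. \<Sum>st\<in>Len m. (monoA (a st) * ds ^ L st) $$ k)"
      unfolding F_def by (simp add: fls_nth_sum)
    also have "\<dots> = (\<Sum>st\<in>Len m. \<Sum>k\<in>{-N..N}. (monoA (a st) * ds ^ L st) $$ k)"
      by (rule sum.swap)
    also have "\<dots> = (\<Sum>st\<in>Len m. (-2) ^ L st)"
      using bnd ws_term by (intro sum.cong) auto
    finally show ?thesis .
  qed
  have "F = 0"
  proof (cases "even (writhe w)")
    case True then show ?thesis using j0 jf by (simp add: sg_def)
  next
    case False then show ?thesis using j0 jf by (simp add: sg_def)
  qed
  then have "(\<Sum>st\<in>Len m. (-2::int) ^ L st) = 0" using sF by simp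
  then have "(\<Sum>st\<in>Len m. (-2::int) ^ L st) mod 3 = 0" by simp
  moreover have "(\<Sum>st\<in>Len m. (-2::int) ^ L st) mod 3 = (\<Sum>st\<in>Len m. ((-2::int) ^ L st) mod 3) mod 3"
    by (simp add: mod_sum_eq)
  moreover have "((-2::int) ^ j) mod 3 = 1" for j
  proof -
    have "((-2::int) ^ j) mod 3 = (((-2::int) mod 3) ^ j) mod 3" by (rule power_mod[symmetric])
    also have "(-2::int) mod 3 = 1" by simp
    finally show ?thesis by simp
  qed
  ultimately have "(int (card (Len m))) mod 3 = 0" by simp
  then have "(2::int) ^ m mod 3 = 0" by (simp add: card_Len)
  then show False using pow2_mod3[of m] by simp
qed

lemma shift1_mult [simp]: "fls_shift a (1::int fls) * fls_shift b 1 = fls_shift (a + b) 1"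
  by (simp add: fls_times_both_shifted_simp)

lemma shift1_pow [simp]: "fls_shift a (1::int fls) ^ k = fls_shift (int k * a) 1"
  by (induction k) (auto simp: algebra_simps)

definition geo :: "nat \<Rightarrow> int fls" where
  "geo e = (\<Sum>j<e. (-1) ^ j * monoA (2 * int j + 1))"

lemma Len_Suc_sum: "(\<Sum>b\<in>Len (Suc e). f b) = (\<Sum>b\<in>Len e. f (True # b)) + (\<Sum>b\<in>Len e. f (False # b))"
proof -
  have eq: "Len (Suc e) = Cons True ` Len e \<union> Cons False ` Len e"
  proof
    show "Len (Suc e) \<subseteq> Cons True ` Len e \<union> Cons False ` Len e"
    proof
      fix b assume "b \<in> Len (Suc e)"
      then obtain x b' where "b = x # b'" "length b' = e" unfolding Len_def by (cases b) auto
      then show "b \<in> Cons True ` Len e \<union> Cons False ` Len e" unfolding Len_def by (cases x) auto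
    qed
    show "Cons True ` Len e \<union> Cons False ` Len e \<subseteq> Len (Suc e)" unfolding Len_def by auto
  qed
  have "(\<Sum>b\<in>Len (Suc e). f b) = (\<Sum>b\<in>Cons True ` Len e. f b) + (\<Sum>b\<in>Cons False ` Len e. f b)"
    unfolding eq by (rule sum.union_disjoint) (auto simp: finite_Len)
  also have "\<dots> = (\<Sum>b\<in>Len e. f (True # b)) + (\<Sum>b\<in>Len e. f (False # b))"
    by (simp add: sum.reindex)
  finally show ?thesis .
qed

lemma Len_append_sum: "(\<Sum>st\<in>Len (a + b). f st) = (\<Sum>u\<in>Len a. \<Sum>v\<in>Len b. f (u @ v))"
proof -
  have eq: "Len (a + b) = (\<lambda>(u, v). u @ v) ` (Len a \<times> Len b)"
  proof
    show "Len (a + b) \<subseteq> (\<lambda>(u, v). u @ v) ` (Len a \<times> Len b)"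
    proof
      fix st assume "st \<in> Len (a + b)"
      then show "st \<in> (\<lambda>(u, v). u @ v) ` (Len a \<times> Len b)" unfolding Len_def
        by (intro image_eqI[where x = "(take a st, drop a st)"]) auto
    qed
    show "(\<lambda>(u, v). u @ v) ` (Len a \<times> Len b) \<subseteq> Len (a + b)" unfolding Len_def by auto
  qed
  have inj: "inj_on (\<lambda>(u, v). u @ v) (Len a \<times> Len b)"
    unfolding Len_def by (auto simp: inj_on_def)
  have "(\<Sum>st\<in>Len (a + b). f st) = (\<Sum>(u, v)\<in>Len a \<times> Len b. f (u @ v))"
    unfolding eq by (subst sum.reindex[OF inj]) (auto simp: comp_def intro!: sum.cong split: prod.splits)
  also have "\<dots> = (\<Sum>u\<in>Len a. \<Sum>v\<in>Len b. f (u @ v))"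
    by (simp add: sum.cartesian_product)
  finally show ?thesis .
qed

lemma monoA_nat_pow: "monoA (int r) = monoA 1 ^ r"
  by (simp add: fls_X_intpow_power)

lemma pow_sum: "(\<Sum>b\<in>Len e. (monoA 1 * ds) ^ count_list b True) = (- monoA 2) ^ e"
proof -
  define X where "X = monoA 1 * ds"
  have X1: "X + 1 = - monoA 2"
    unfolding X_def ds_def by (simp add: algebra_simps)
  have "(\<Sum>b\<in>Len e. X ^ count_list b True) = (- monoA 2) ^ e"
  proof (induction e)
    case 0 then show ?case by (simp add: Len_def)
  next
    case (Suc e)
    have "(\<Sum>b\<in>Len (Suc e). X ^ count_list b True)
        = (\<Sum>b\<in>Len e. X * X ^ count_list b True) + (\<Sum>b\<in>Len e. X ^ count_list b True)"
      unfolding Len_Suc_sum by (intro arg_cong2[where f="(+)"] sum.cong) auto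
    also have "\<dots> = (X + 1) * (\<Sum>b\<in>Len e. X ^ count_list b True)"
      by (simp add: sum_distrib_left algebra_simps sum.distrib)
    also have "\<dots> = (- monoA 2) ^ Suc e" using Suc X1 by simp
    finally show ?case .
  qed
  then show ?thesis unfolding X_def .
qed

lemma Len0: "Len 0 = {[]}" unfolding Len_def by auto

lemma inner_sum:
  "(\<Sum>b\<in>Len e. monoA (int (count_list b True)) *
      (if count_list b True = 0 then D0 else DU * ds ^ (count_list b True - 1))) = D0 + DU * geo e"
proof (induction e)
  case 0 then show ?case by (simp add: Len0 geo_def)
next
  case (Suc e)
  have t: "monoA (int (count_list (True # b) True)) *
      (if count_list (True # b) True = 0 then D0 else DU * ds ^ (count_list (True # b) True - 1))
      = DU * monoA 1 * (monoA 1 * ds) ^ count_list b True" for b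
  proof -
    have c: "count_list (True # b) True = Suc (count_list b True)" by simp
    show ?thesis
      unfolding c monoA_nat_pow
      by (simp only: Suc_not_Zero if_False diff_Suc_1 power_Suc power_mult_distrib mult_ac)
  qed
  have "(\<Sum>b\<in>Len e. monoA (int (count_list (True # b) True)) *
      (if count_list (True # b) True = 0 then D0 else DU * ds ^ (count_list (True # b) True - 1)))
      = (\<Sum>b\<in>Len e. DU * monoA 1 * (monoA 1 * ds) ^ count_list b True)"
    by (rule sum.cong[OF refl], rule t)
  also have "\<dots> = DU * monoA 1 * (- monoA 2) ^ e"
    by (simp only: sum_distrib_left[symmetric] pow_sum)
  also have "\<dots> = DU * ((-1) ^ e * monoA (2 * int e + 1))"
  proof -
    have m2: "(- monoA 2 :: int fls) = (-1) * monoA 2" by simp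
    have m3: "(monoA 2 :: int fls) ^ e = monoA (2 * int e)" by (simp add: algebra_simps)
    have p: "(- monoA 2 :: int fls) ^ e = (-1) ^ e * monoA (2 * int e)"
      by (simp only: m2 power_mult_distrib m3)
    have h: "monoA 1 * monoA (2 * int e) = monoA (2 * int e + 1)" by (simp add: algebra_simps)
    have "DU * monoA 1 * ((-1) ^ e * monoA (2 * int e)) = DU * ((-1) ^ e * (monoA 1 * monoA (2 * int e)))"
      by (simp only: mult_ac)
    then show ?thesis by (simp only: h p)
  qed
  finally have a: "(\<Sum>b\<in>Len e. monoA (int (count_list (True # b) True)) *
      (if count_list (True # b) True = 0 then D0 else DU * ds ^ (count_list (True # b) True - 1)))
      = DU * ((-1) ^ e * monoA (2 * int e + 1))" .
  have f: "(\<Sum>b\<in>Len e. monoA (int (count_list (False # b) True)) *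
      (if count_list (False # b) True = 0 then D0 else DU * ds ^ (count_list (False # b) True - 1)))
      = D0 + DU * geo e"
  proof -
    have cF: "count_list (False # b) True = count_list b True" for b by simp
    show ?thesis unfolding cF by (rule Suc.IH)
  qed
  have g: "geo (Suc e) = geo e + (-1) ^ e * monoA (2 * int e + 1)" unfolding geo_def by simp
  show ?case
    by (simp only: Len_Suc_sum a f g distrib_left add_ac)
qed

lemma cTF_append: "cTF (u @ v) = cTF u + cTF v"
  unfolding cTF_def by simp

lemma cTF_b: "cTF b = 2 * int (count_list b True) - int (length b)"
  using count_TF[of b] unfolding cTF_def by linarith

lemma sg_shift: "sg (z - int e) = sg z * (-1) ^ e"
  unfolding sg_def by (cases "even e") (auto simp: even_diff)

lemma term_block:
  assumes i: "1 \<le> i0" "i0 < n"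
    and lu: "length u = length P" and lb: "length b = e" and lv: "length v = length S"
  shows "monoA ((cTF (u @ b @ v) - 3 * writhe (P @ replicate e (i0, True) @ S)) div 2)
           * ds ^ (num_loops n (P @ replicate e (i0, True) @ S) (u @ b @ v) - 1)
       = monoA ((cTF (u @ v) - 3 * writhe (P @ S)) div 2) * monoA (int e) *
         (monoA (int (count_list b True)) *
          (if count_list b True = 0 then ds ^ (ncount n (cl P u @ cl S v) - 1)
           else ds ^ (ncount n (cl P u @ (i0, True) # cl S v) - 1) * ds ^ (count_list b True - 1)))"
proof -
  define W where "W = P @ replicate e (i0, True) @ S"
  define r where "r = count_list b True"
  define a0 where "a0 = (cTF (u @ v) - 3 * writhe (P @ S)) div 2"
  define L0 where "L0 = ncount n (cl P u @ cl S v)"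
  define LU where "LU = ncount n (cl P u @ (i0, True) # cl S v)"
  have wW: "writhe W = writhe (P @ S) - int e"
    unfolding W_def by (simp add: writhe_append writhe_replicate_True)
  have cT: "cTF (u @ b @ v) = cTF (u @ v) + 2 * int r - int e"
    unfolding r_def using cTF_b[of b] lb by (simp add: cTF_append)
  have a: "(cTF (u @ b @ v) - 3 * writhe W) div 2 = a0 + int r + int e"
  proof -
    have "cTF (u @ b @ v) - 3 * writhe W = (cTF (u @ v) - 3 * writhe (P @ S)) + 2 * (int r + int e)"
      using cT wW by simp
    then show ?thesis unfolding a0_def by simp
  qed
  have len: "length (u @ b @ v) = length W" unfolding W_def using lu lb lv by simp
  have clW: "cl W (u @ b @ v) = cl P u @ map (Pair i0) b @ cl S v"
    unfolding W_def using lu lb lv by (simp add: cl_append cl_replicate)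
  have nl: "num_loops n W (u @ b @ v) = (if True \<in> set b then LU + r - 1 else L0)"
    unfolding num_loops_ncount[OF len] clW LU_def L0_def r_def by (rule ncount_block[OF i])
  have LU1: "1 \<le> LU" unfolding LU_def using i by (intro ncount_pos) simp
  have pw: "ds ^ (num_loops n W (u @ b @ v) - 1)
     = (if r = 0 then ds ^ (L0 - 1) else ds ^ (LU - 1) * ds ^ (r - 1))"
  proof (cases "r = 0")
    case True
    then have "True \<notin> set b" unfolding r_def by (simp add: count_list_0_iff)
    then show ?thesis using True nl by simp
  next
    case False
    then have "True \<in> set b" unfolding r_def by (simp add: count_list_0_iff)
    then have e: "num_loops n W (u @ b @ v) - 1 = (LU - 1) + (r - 1)" using nl False LU1 by simp
    show ?thesis by (simp only: e power_add if_not_P[OF False])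
  qed
  have m: "monoA (a0 + int r + int e) = monoA a0 * monoA (int e) * monoA (int r)"
    by (simp add: algebra_simps)
  show ?thesis
    unfolding W_def[symmetric] a0_def[symmetric] L0_def[symmetric] LU_def[symmetric] r_def[symmetric]
    unfolding a pw m by simp
qed

definition a0f :: "letter list \<Rightarrow> letter list \<Rightarrow> bool list \<Rightarrow> bool list \<Rightarrow> int" where
  "a0f P S u v = (cTF (u @ v) - 3 * writhe (P @ S)) div 2"

definition GG :: "nat \<Rightarrow> letter list \<Rightarrow> letter list \<Rightarrow> int fls" where
  "GG n P S = (\<Sum>u\<in>Len (length P). \<Sum>v\<in>Len (length S).
      monoA (a0f P S u v) * ds ^ (ncount n (cl P u @ cl S v) - 1))"

definition HH :: "nat \<Rightarrow> nat \<Rightarrow> letter list \<Rightarrow> letter list \<Rightarrow> int fls" where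
  "HH n i0 P S = (\<Sum>u\<in>Len (length P). \<Sum>v\<in>Len (length S).
      monoA (a0f P S u v) * ds ^ (ncount n (cl P u @ (i0, True) # cl S v) - 1))"

lemma jones_block:
  assumes i: "1 \<le> i0" "i0 < n"
  shows "jones n (P @ replicate e (i0, True) @ S) =
    sg (writhe (P @ S)) * ((-1) ^ e * (monoA (int e) * (GG n P S + HH n i0 P S * geo e)))"
proof -
  define W where "W = P @ replicate e (i0, True) @ S"
  define T where "T st = monoA ((cTF st - 3 * writhe W) div 2) * ds ^ (num_loops n W st - 1)" for st
  define A where "A u v = monoA (a0f P S u v)" for u v
  define D0 where "D0 u v = ds ^ (ncount n (cl P u @ cl S v) - 1)" for u v
  define DU where "DU u v = ds ^ (ncount n (cl P u @ (i0, True) # cl S v) - 1)" for u v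
  have jf: "jones n W = sg (writhe W) * (\<Sum>st\<in>Len (length W). T st)"
    unfolding T_def by (rule jones_formula)
  have lW: "length W = length P + (e + length S)" unfolding W_def by simp
  have "(\<Sum>st\<in>Len (length W). T st) = (\<Sum>u\<in>Len (length P). \<Sum>x\<in>Len (e + length S). T (u @ x))"
    unfolding lW by (rule Len_append_sum)
  also have "\<dots> = (\<Sum>u\<in>Len (length P). \<Sum>b\<in>Len e. \<Sum>v\<in>Len (length S). T (u @ b @ v))"
    by (rule sum.cong[OF refl], rule Len_append_sum)
  also have "\<dots> = (\<Sum>u\<in>Len (length P). \<Sum>v\<in>Len (length S). \<Sum>b\<in>Len e. T (u @ b @ v))"
    by (rule sum.cong[OF refl], rule sum.swap)
  also have "\<dots> = (\<Sum>u\<in>Len (length P). \<Sum>v\<in>Len (length S). \<Sum>b\<in>Len e.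
      A u v * monoA (int e) * (monoA (int (count_list b True)) *
          (if count_list b True = 0 then D0 u v else DU u v * ds ^ (count_list b True - 1))))"
    unfolding T_def W_def A_def D0_def DU_def a0f_def
    by (intro sum.cong refl term_block[OF i]) (auto simp: Len_def)
  also have "\<dots> = (\<Sum>u\<in>Len (length P). \<Sum>v\<in>Len (length S).
      A u v * monoA (int e) * (D0 u v + DU u v * geo e))"
    by (rule sum.cong[OF refl], rule sum.cong[OF refl], simp only: sum_distrib_left[symmetric] inner_sum)
  also have "\<dots> = monoA (int e) * ((\<Sum>u\<in>Len (length P). \<Sum>v\<in>Len (length S). A u v * D0 u v)
      + (\<Sum>u\<in>Len (length P). \<Sum>v\<in>Len (length S). A u v * DU u v) * geo e)"
    by (simp add: sum_distrib_left sum_distrib_right sum.distrib algebra_simps)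
  also have "\<dots> = monoA (int e) * (GG n P S + HH n i0 P S * geo e)"
    unfolding GG_def HH_def A_def D0_def DU_def by simp
  finally have s: "(\<Sum>st\<in>Len (length W). T st) = monoA (int e) * (GG n P S + HH n i0 P S * geo e)" .
  have "writhe W = writhe (P @ S) - int e"
    unfolding W_def by (simp add: writhe_append writhe_replicate_True)
  then have "sg (writhe W) = sg (writhe (P @ S)) * (-1) ^ e" by (simp add: sg_shift)
  then show ?thesis using jf s unfolding W_def by (simp add: mult.assoc)
qed

definition ubd :: "int fls \<Rightarrow> int \<Rightarrow> bool" where
  "ubd f b \<longleftrightarrow> (\<forall>k>b. f $$ k = 0)"

definition LP :: "int fls \<Rightarrow> bool" where
  "LP f \<longleftrightarrow> (\<exists>b. ubd f b)"

lemma ubd_mono: "ubd f b \<Longrightarrow> b \<le> b' \<Longrightarrow> ubd f b'"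
  unfolding ubd_def by auto

lemma ubd_mult: assumes "ubd f b" "ubd g c" shows "ubd (f * g) (b + c)"
  unfolding ubd_def
proof (intro allI impI)
  fix n assume n: "n > b + c"
  have "(f * g) $$ n = (\<Sum>i = fls_subdegree f..n - fls_subdegree g. f $$ i * g $$ (n - i))"
    by (rule fls_times_nth(2))
  also have "\<dots> = 0"
  proof (rule sum.neutral, rule ballI)
    fix i
    show "f $$ i * g $$ (n - i) = 0"
    proof (cases "i > b")
      case True then show ?thesis using assms(1) unfolding ubd_def by simp
    next
      case False then have "n - i > c" using n by simp
      then show ?thesis using assms(2) unfolding ubd_def by simp
    qed
  qed
  finally show "(f * g) $$ n = 0" .
qed

lemma lead_mult: assumes "ubd f b" "ubd g c" shows "(f * g) $$ (b + c) = f $$ b * g $$ c"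
proof -
  define n where "n = b + c"
  have "(f * g) $$ n = (\<Sum>i = fls_subdegree f..n - fls_subdegree g. f $$ i * g $$ (n - i))"
    by (rule fls_times_nth(2))
  also have "\<dots> = (\<Sum>i = fls_subdegree f..n - fls_subdegree g. if i = b then f $$ b * g $$ c else 0)"
  proof (rule sum.cong[OF refl])
    fix i
    show "f $$ i * g $$ (n - i) = (if i = b then f $$ b * g $$ c else 0)"
    proof (cases "i = b")
      case True then show ?thesis unfolding n_def by simp
    next
      case False
      show ?thesis
      proof (cases "i > b")
        case True then show ?thesis using assms(1) False unfolding ubd_def by simp
      next
        case False': False
        then have "n - i > c" using False unfolding n_def by simp
        then show ?thesis using assms(2) False unfolding ubd_def by simp
      qed
    qed
  qed
  also have "\<dots> = f $$ b * g $$ c"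
  proof (cases "b \<in> {fls_subdegree f..n - fls_subdegree g}")
    case True then show ?thesis by simp
  next
    case False
    then have "b < fls_subdegree f \<or> c < fls_subdegree g" unfolding n_def by auto
    then show ?thesis using False by auto
  qed
  finally show ?thesis unfolding n_def .
qed

lemma ubd_add: "ubd f b \<Longrightarrow> ubd g c \<Longrightarrow> ubd (f + g) (max b c)"
  unfolding ubd_def by auto

lemma LP_add: "LP f \<Longrightarrow> LP g \<Longrightarrow> LP (f + g)"
  unfolding LP_def using ubd_add by blast

lemma LP_mult: "LP f \<Longrightarrow> LP g \<Longrightarrow> LP (f * g)"
  unfolding LP_def using ubd_mult by blast

lemma LP_sum: "finite A \<Longrightarrow> (\<And>x. x \<in> A \<Longrightarrow> LP (f x)) \<Longrightarrow> LP (\<Sum>x\<in>A. f x)"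
proof (induction rule: finite_induct)
  case empty then show ?case unfolding LP_def ubd_def by auto
next
  case (insert x F) then show ?case by (simp add: LP_add)
qed

lemma LP_one: "LP 1" unfolding LP_def ubd_def by (intro exI[of _ 0]) simp

lemma LP_pow: "LP f \<Longrightarrow> LP (f ^ k)"
  by (induction k) (auto simp: LP_one LP_mult)

lemma LP_monoA: "LP (monoA a)" unfolding LP_def ubd_def by (intro exI[of _ a]) simp

lemma LP_uminus: "LP f \<Longrightarrow> LP (- f)" unfolding LP_def ubd_def by simp

lemma LP_ds: "LP ds" unfolding ds_def using LP_monoA LP_add LP_uminus
  by (metis diff_conv_add_uminus)

lemma LP_neg1pow: "LP ((-1) ^ j)" by (intro LP_pow LP_uminus LP_one)

lemma LP_GG: "LP (GG n P S)" unfolding GG_def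
  by (intro LP_sum finite_Len LP_mult LP_monoA LP_pow LP_ds)

lemma LP_HH: "LP (HH n i0 P S)" unfolding HH_def
  by (intro LP_sum finite_Len LP_mult LP_monoA LP_pow LP_ds)

lemma LP_geo: "LP (geo e)" unfolding geo_def
  by (intro LP_sum finite_lessThan LP_mult LP_monoA LP_neg1pow)

lemma deg_ge: assumes "LP f" "f $$ k \<noteq> 0" shows "k \<le> fls_deg f"
proof -
  obtain B where B: "ubd f B" using assms(1) unfolding LP_def by auto
  have "{k. f $$ k \<noteq> 0} \<subseteq> {fls_subdegree f..B}"
  proof (rule subsetI)
    fix x assume "x \<in> {k. f $$ k \<noteq> 0}"
    then have x: "f $$ x \<noteq> 0" by simp
    then have "fls_subdegree f \<le> x" by (rule fls_subdegree_leI)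
    moreover have "x \<le> B" using B x unfolding ubd_def by (meson not_le)
    ultimately show "x \<in> {fls_subdegree f..B}" by simp
  qed
  then have "finite {k. f $$ k \<noteq> 0}" using finite_subset by blast
  then show ?thesis unfolding fls_deg_def using assms(2) by (intro Max_ge) auto
qed

lemma deg_props: assumes "LP f" "f \<noteq> 0" shows "f $$ fls_deg f \<noteq> 0" "ubd f (fls_deg f)"
proof -
  obtain B where B: "ubd f B" using assms(1) unfolding LP_def by auto
  have "{k. f $$ k \<noteq> 0} \<subseteq> {fls_subdegree f..B}"
  proof (rule subsetI)
    fix x assume "x \<in> {k. f $$ k \<noteq> 0}"
    then have x: "f $$ x \<noteq> 0" by simp
    then have "fls_subdegree f \<le> x" by (rule fls_subdegree_leI)
    moreover have "x \<le> B" using B x unfolding ubd_def by (meson not_le)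
    ultimately show "x \<in> {fls_subdegree f..B}" by simp
  qed
  then have fin: "finite {k. f $$ k \<noteq> 0}" using finite_subset by blast
  have ne: "{k. f $$ k \<noteq> 0} \<noteq> {}" using assms(2) by (auto simp: fls_eq_iff)
  show "f $$ fls_deg f \<noteq> 0" unfolding fls_deg_def using Max_in[OF fin ne] by simp
  show "ubd f (fls_deg f)" unfolding ubd_def
  proof (intro allI impI)
    fix k assume "k > fls_deg f"
    then show "f $$ k = 0" using deg_ge[OF assms(1)] by force
  qed
qed

lemma neg1pow_cases: "((-1) ^ j :: int fls) = 1 \<or> ((-1) ^ j :: int fls) = -1"
  by (cases "even j") simp_all

lemma neg1pow_nth: "((-1) ^ j * f :: int fls) $$ k = (-1) ^ j * f $$ k"
  using neg1pow_cases[of j] by (cases "even j") auto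

lemma monoA_nth: "monoA a $$ k = (if k = a then 1 else 0)"
  by simp

lemma geo_nth: "geo e $$ k = (\<Sum>j<e. if k = 2 * int j + 1 then (-1) ^ j else 0)"
  unfolding geo_def fls_nth_sum by (intro sum.cong refl) (auto simp: neg1pow_nth)

lemma geo_sub: "\<forall>k<0. geo e $$ k = 0"
  by (simp add: geo_nth)

lemma geo_ubd: "ubd (geo e) (2 * int e - 1)"
  unfolding ubd_def by (auto simp: geo_nth intro!: sum.neutral)

lemma geo_lead: "e \<ge> 1 \<Longrightarrow> geo e $$ (2 * int e - 1) = (-1) ^ (e - 1)"
proof -
  assume e: "e \<ge> 1"
  have "geo e $$ (2 * int e - 1) = (\<Sum>j<e. if j = e - 1 then (-1) ^ j else 0)"
    unfolding geo_nth using e by (intro sum.cong refl) auto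
  also have "\<dots> = (-1) ^ (e - 1)" using e by simp
  finally show ?thesis .
qed

lemma unit_cases_nth: "u = 1 \<or> u = -1 \<Longrightarrow> ((u * f :: int fls) $$ k = 0) = (f $$ k = 0)"
  by auto

lemma unit_props:
  assumes u: "u = 1 \<or> u = (-1 :: int fls)"
  shows "(u * f \<noteq> 0) = (f \<noteq> 0)" "is_poly_s (u * f) = is_poly_s f"
    "fls_deg (u * f) = fls_deg f" "LP f \<Longrightarrow> LP (u * f)"
proof -
  have nth: "((u * f) $$ k = 0) = (f $$ k = 0)" for k using unit_cases_nth[OF u] .
  show "(u * f \<noteq> 0) = (f \<noteq> 0)" using nth by (auto simp: fls_eq_iff)
  show "is_poly_s (u * f) = is_poly_s f" using nth unfolding is_poly_s_def by auto
  show "fls_deg (u * f) = fls_deg f" using nth unfolding fls_deg_def by auto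
  show "LP f \<Longrightarrow> LP (u * f)" using nth unfolding LP_def ubd_def by auto
qed

lemma nth_monoA_mult': "(monoA a * f) $$ k = f $$ (k - a)"
  by (simp add: fls_X_intpow_times_conv_shift)

lemma core_K:
  fixes G H :: "int fls"
  assumes G: "G \<noteq> 0" "LP G" and H: "LP H"
  defines "K \<equiv> (\<lambda>e::nat. monoA (int e) * (G + H * geo e))"
  shows "\<exists>C N0. \<forall>e\<ge>N0. K e \<noteq> 0 \<and> is_poly_s (K e) \<and> int e + C \<le> fls_deg (K e)"
proof -
  have Knth: "K e $$ k = G $$ (k - int e) + (H * geo e) $$ (k - int e)" for e k
    unfolding K_def by (simp add: nth_monoA_mult')
  have LPK: "LP (K e)" for e unfolding K_def
    by (intro LP_mult LP_add LP_monoA G H LP_geo)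
  define N1 where "N1 = nat (max (- fls_subdegree G) (- fls_subdegree H))"
  have poly: "is_poly_s (K e)" if "e \<ge> N1" for e
    unfolding is_poly_s_def
  proof (intro allI impI)
    fix k :: int assume k: "k < 0"
    have e1: "- fls_subdegree G \<le> int e" "- fls_subdegree H \<le> int e" using that unfolding N1_def by auto
    have g0: "G $$ (k - int e) = 0" using k e1 by simp
    have sg0: "0 \<le> fls_subdegree (geo e)" by (rule fls_subdegree_ge0I) (use geo_sub in auto)
    have h0: "(H * geo e) $$ (k - int e) = 0" using k e1 sg0 by (intro fls_times_nth_eq0) simp
    show "K e $$ k = 0" using g0 h0 Knth by simp
  qed
  define dG where "dG = fls_deg G"
  have dG: "G $$ dG \<noteq> 0" "ubd G dG" using deg_props[OF G(2) G(1)] unfolding dG_def by auto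
  show ?thesis
  proof (cases "H = 0")
    case True
    have "K e $$ (int e + dG) = G $$ dG" for e using Knth True by simp
    then have nz: "K e $$ (int e + dG) \<noteq> 0" for e using dG by simp
    show ?thesis
    proof (intro exI allI impI conjI)
      fix e assume e: "e \<ge> N1"
      show "K e \<noteq> 0" using nz[of e] by auto
      show "is_poly_s (K e)" using poly e by simp
      show "int e + dG \<le> fls_deg (K e)" using deg_ge[OF LPK nz] .
    qed
  next
    case False
    define dH where "dH = fls_deg H"
    have dH: "H $$ dH \<noteq> 0" "ubd H dH" using deg_props[OF H False] unfolding dH_def by auto
    define N2 where "N2 = nat (dG - dH + 2)"
    have nz: "K e $$ (int e + (dH + (2 * int e - 1))) \<noteq> 0" if "e \<ge> max 1 N2" for e
    proof -
      define q where "q = dH + (2 * int e - 1)"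
      have e1: "e \<ge> 1" "int e \<ge> dG - dH + 2" using that unfolding N2_def by auto
      have "G $$ q = 0" using dG(2) e1 unfolding ubd_def q_def by simp
      moreover have "(H * geo e) $$ q = H $$ dH * (-1) ^ (e - 1)"
        using lead_mult[OF dH(2) geo_ubd[of e]] geo_lead[OF e1(1)] unfolding q_def by simp
      moreover have "K e $$ (int e + q) = G $$ q + (H * geo e) $$ q"
        using Knth[of e "int e + q"] by simp
      ultimately have "K e $$ (int e + q) = H $$ dH * (-1) ^ (e - 1)" by simp
      then show ?thesis using dH(1) unfolding q_def by simp
    qed
    show ?thesis
    proof (intro exI[of _ "dH - 1"] exI[of _ "max N1 (max 1 N2)"] allI impI conjI)
      fix e assume e: "e \<ge> max N1 (max 1 N2)"
      then have e2: "e \<ge> max 1 N2" by simp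
      show "K e \<noteq> 0" using nz[OF e2] by auto
      show "is_poly_s (K e)" using poly e by simp
      have "int e + (dH + (2 * int e - 1)) \<le> fls_deg (K e)" using deg_ge[OF LPK nz[OF e2]] .
      then show "int e + (dH - 1) \<le> fls_deg (K e)" by simp
    qed
  qed
qed

lemma sg_cases: "sg z = 1 \<or> sg z = -1" unfolding sg_def by simp

lemma core:
  assumes i: "1 \<le> i0" "i0 < n"
  shows "\<exists>C N0. \<forall>e\<ge>N0. jones n (P @ replicate e (i0, True) @ S) \<noteq> 0
     \<and> is_poly_s (jones n (P @ replicate e (i0, True) @ S))
     \<and> int e + C \<le> fls_deg (jones n (P @ replicate e (i0, True) @ S))"
proof -
  define G where "G = GG n P S"
  define H where "H = HH n i0 P S"
  define K where "K = (\<lambda>e::nat. monoA (int e) * (G + H * geo e))"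
  define u where "u e = sg (writhe (P @ S)) * (-1) ^ e" for e :: nat
  have J: "jones n (P @ replicate e (i0, True) @ S) = u e * K e" for e
    unfolding u_def K_def G_def H_def using jones_block[OF i] by (simp add: mult.assoc)
  have u: "u e = 1 \<or> u e = -1" for e
    unfolding u_def using sg_cases[of "writhe (P @ S)"] neg1pow_cases[of e] by auto
  have "jones n (P @ replicate 0 (i0, True) @ S) \<noteq> 0" using i by (intro jones_nonzero) simp
  then have "K 0 \<noteq> 0" unfolding J using unit_props(1)[OF u] by simp
  then have G0: "G \<noteq> 0" unfolding K_def by (simp add: geo_def)
  obtain C N0 where CN: "\<forall>e\<ge>N0. K e \<noteq> 0 \<and> is_poly_s (K e) \<and> int e + C \<le> fls_deg (K e)"
    using core_K[OF G0 _ LP_HH[of n i0 P S]] LP_GG[of n P S] unfolding K_def G_def H_def by blast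
  have u0: "u e \<noteq> 0" for e using u[of e] by auto
  show ?thesis
    using CN unfolding J by (intro exI[of _ C] exI[of _ N0]) (auto simp: unit_props[OF u] u0)
qed

theorem proposition1p4:
  fixes n k j :: nat and i :: "nat \<Rightarrow> nat" and a :: "nat \<Rightarrow> int"
  assumes "n \<ge> 2" and "k \<ge> 1"
    and "\<forall>h \<in> {1..k}. 1 \<le> i h \<and> i h \<le> n - 1"
    and "j \<in> {1..k}"
  defines "W \<equiv> (\<lambda>e::int. concat (map (\<lambda>h. gen_pow (i h) (if h = j then e else a h)) [1..<Suc k]))"
  shows "(\<forall>\<^sub>F e in at_top. jones n (W e) \<noteq> 0 \<and> is_poly_s (jones n (W e)))
     \<and> filterlim (\<lambda>e. fls_deg (jones n (W e))) at_top at_top"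
proof -
  define i0 where "i0 = i j"
  have "1 \<le> i j \<and> i j \<le> n - 1" using assms(3,4) by blast
  then have i: "1 \<le> i0" "i0 < n" using assms(1) unfolding i0_def by auto
  define P where "P = concat (map (\<lambda>h. gen_pow (i h) (a h)) [1..<j])"
  define S where "S = concat (map (\<lambda>h. gen_pow (i h) (a h)) [Suc j..<Suc k])"
  have split: "[1..<Suc k] = [1..<j] @ j # [Suc j..<Suc k]"
  proof -
    have "[1..<Suc k] = [1..<j] @ [j..<Suc k]" using assms(4) upt_add_eq_append[of 1 j "Suc k - j"] by simp
    also have "[j..<Suc k] = j # [Suc j..<Suc k]" using assms(4) by (simp add: upt_conv_Cons)
    finally show ?thesis .
  qed
  have WP: "W e = P @ gen_pow i0 e @ S" for e
  proof -
    have m1: "map (\<lambda>h. gen_pow (i h) (if h = j then e else a h)) [1..<j] = map (\<lambda>h. gen_pow (i h) (a h)) [1..<j]"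
      by (intro map_cong refl) auto
    have m2: "map (\<lambda>h. gen_pow (i h) (if h = j then e else a h)) [Suc j..<Suc k] = map (\<lambda>h. gen_pow (i h) (a h)) [Suc j..<Suc k]"
      by (intro map_cong refl) auto
    show ?thesis unfolding W_def split P_def S_def i0_def by (simp only: map_append list.map concat_append concat.simps m1 m2 simp_thms if_True append_assoc)
  qed
  have Wn: "W e = P @ replicate (nat e) (i0, True) @ S" if "0 \<le> e" for e
    unfolding WP gen_pow_def using that by simp
  obtain C N0 where CN: "\<forall>e\<ge>N0. jones n (P @ replicate e (i0, True) @ S) \<noteq> 0
     \<and> is_poly_s (jones n (P @ replicate e (i0, True) @ S))
     \<and> int e + C \<le> fls_deg (jones n (P @ replicate e (i0, True) @ S))"
    using core[OF i] by blast
  have main: "jones n (W e) \<noteq> 0 \<and> is_poly_s (jones n (W e)) \<and> e + C \<le> fls_deg (jones n (W e))"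
    if "e \<ge> int N0" for e
  proof -
    have e0: "0 \<le> e" using that by simp
    have "nat e \<ge> N0" using that by simp
    then show ?thesis using CN e0 unfolding Wn[OF e0] by auto
  qed
  have ev: "\<forall>\<^sub>F e in at_top. jones n (W e) \<noteq> 0 \<and> is_poly_s (jones n (W e))"
    unfolding eventually_at_top_linorder using main by blast
  have "filterlim (\<lambda>e. fls_deg (jones n (W e))) at_top at_top"
    unfolding filterlim_at_top
  proof
    fix Z :: int
    show "\<forall>\<^sub>F e in at_top. Z \<le> fls_deg (jones n (W e))"
      unfolding eventually_at_top_linorder
    proof (intro exI[of _ "max (int N0) (Z - C)"] allI impI)
      fix e assume "max (int N0) (Z - C) \<le> e"
      then show "Z \<le> fls_deg (jones n (W e))" using main[of e] by auto
    qed
  qed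
  with ev show ?thesis by blast
qed

end
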